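(* Let $k\ge1$. Let $(G_1,\dots,G_k)$ be distributed according to $\gamma_k$, $U$ uniform on $\{0,1,\dots,k\}$, and $\tau$ a uniform random permutation of $\{0,1,\dots,k\}$, all independent. Let $(I_1,\dots,I_{k+1})\sim\mu_{k+1}$ and $U'$ uniform on $\{1,\dots,k+1\}$ independent of it, and set $J=(I_i-I_{U'})_{1\le i\le k+1}$. Then $(\bar G_{\tau(i)}-\bar G_U)_{0\le i\le k}\overset{(d)}{=}J$, where $\bar G_0=0$ and $\bar G_i=G_1+\dots+G_i$.
   Context: Let $B_1,B_2,\dots$ be i.i.d. two-sided standard Brownian motions and $I^{(n)}=B_n\circ\cdots\circ B_1$. It is known that for any $m\ge1$ and distinct nonzero reals $t_1,\dots,t_m$, $(I^{(n)}(t_1),\dots,I^{(n)}(t_m))$ converges in distribution to a law $\mu_m$ independent of the $t_i$'s (hence exchangeable), and that for $(I_1,\dots,I_m)\sim\mu_m$, $(I_2-I_1,\dots,I_m-I_1)\sim\mu_{m-1}$. For a sequence $\ell_0,\dots,\ell_k$ with increasing rearrangement $\hat\ell_0\le\dots\le\hat\ell_k$, its gaps sequence is $(\hat\ell_i-\hat\ell_{i-1})_{1\le i\le k}$. $\gamma_k$ is the law of the gaps sequence of a $\mu_{k+1}$-distributed vector. *)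

theory Defs
  imports "HOL-Probability.Probability"
begin

definition two_sided_BM :: "'a measure \<Rightarrow> ('a \<Rightarrow> real \<Rightarrow> real) \<Rightarrow> bool" where
  "two_sided_BM M X \<longleftrightarrow>
     (\<forall>t. (\<lambda>\<omega>. X \<omega> t) \<in> borel_measurable M) \<and>
     (\<forall>\<omega>\<in>space M. X \<omega> 0 = 0 \<and> continuous_on UNIV (X \<omega>)) \<and>
     (\<forall>s t. s < t \<longrightarrow>
        distributed M lborel (\<lambda>\<omega>. X \<omega> t - X \<omega> s)
          (\<lambda>x. ennreal (normal_density 0 (sqrt (t - s)) x))) \<and>
     (\<forall>ts :: real list. sorted_wrt (<) ts \<longrightarrow>
        prob_space.indep_vars M (\<lambda>_. borel)
          (\<lambda>i \<omega>. X \<omega> (ts ! Suc i) - X \<omega> (ts ! i)) {..<length ts - 1})"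

definition iid_two_sided_BMs :: "'a measure \<Rightarrow> (nat \<Rightarrow> 'a \<Rightarrow> real \<Rightarrow> real) \<Rightarrow> bool" where
  "iid_two_sided_BMs M B \<longleftrightarrow>
     prob_space M \<and> (\<forall>n. two_sided_BM M (B n)) \<and>
     prob_space.indep_vars M (\<lambda>_. Pi\<^sub>M (UNIV :: real set) (\<lambda>_. borel)) B UNIV"

fun iter_BM :: "(nat \<Rightarrow> 'a \<Rightarrow> real \<Rightarrow> real) \<Rightarrow> nat \<Rightarrow> 'a \<Rightarrow> real \<Rightarrow> real" where
  "iter_BM B 0 \<omega> = id"
| "iter_BM B (Suc n) \<omega> = B n \<omega> \<circ> iter_BM B n \<omega>"

definition conv_in_distr ::
  "nat \<Rightarrow> (nat \<Rightarrow> (nat \<Rightarrow> real) measure) \<Rightarrow> (nat \<Rightarrow> real) measure \<Rightarrow> bool" where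
  "conv_in_distr m P Q \<longleftrightarrow>
     (\<forall>f :: (nat \<Rightarrow> real) \<Rightarrow> real.
        continuous_on (PiE {..<m} (\<lambda>_. UNIV)) f \<longrightarrow>
        bounded (f ` PiE {..<m} (\<lambda>_. UNIV)) \<longrightarrow>
        (\<lambda>n. \<integral>x. f x \<partial>P n) \<longlonglongrightarrow> (\<integral>x. f x \<partial>Q))"

text \<open>mu is the law mu_m: for all distinct nonzero t_1..t_m (here indexed 0..m-1),
  the law of (I^(n)(t_i))_i converges in distribution to mu.\<close>
definition is_mu :: "'a measure \<Rightarrow> (nat \<Rightarrow> 'a \<Rightarrow> real \<Rightarrow> real) \<Rightarrow> nat \<Rightarrow> (nat \<Rightarrow> real) measure \<Rightarrow> bool" where
  "is_mu M B m \<mu> \<longleftrightarrow>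
     sets \<mu> = sets (Pi\<^sub>M {..<m} (\<lambda>_. borel)) \<and> prob_space \<mu> \<and>
     (\<forall>t :: nat \<Rightarrow> real. inj_on t {..<m} \<and> (\<forall>i<m. t i \<noteq> 0) \<longrightarrow>
        conv_in_distr m
          (\<lambda>n. distr M (Pi\<^sub>M {..<m} (\<lambda>_. borel)) (\<lambda>\<omega>. \<lambda>i\<in>{..<m}. iter_BM B n \<omega> (t i)))
          \<mu>)"

definition sorted_rearr :: "nat \<Rightarrow> (nat \<Rightarrow> real) \<Rightarrow> nat \<Rightarrow> real" where
  "sorted_rearr k l i = sort (map l [0..<Suc k]) ! i"

definition gaps :: "nat \<Rightarrow> (nat \<Rightarrow> real) \<Rightarrow> nat \<Rightarrow> real" where
  "gaps k l = (\<lambda>i\<in>{1..k}. sorted_rearr k l i - sorted_rearr k l (i - 1))"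

definition gamma :: "nat \<Rightarrow> (nat \<Rightarrow> real) measure \<Rightarrow> (nat \<Rightarrow> real) measure" where
  "gamma k \<mu> = distr \<mu> (Pi\<^sub>M {1..k} (\<lambda>_. borel)) (gaps k)"

definition Gbar :: "(nat \<Rightarrow> real) \<Rightarrow> nat \<Rightarrow> real" where
  "Gbar g i = (\<Sum>j=1..i. g j)"

end

theory Submission
  imports Defs
begin

lemma sort_perm_ex:
  fixes x :: "nat \<Rightarrow> real"
  obtains p where "p permutes {..k}" "\<And>i. i \<le> k \<Longrightarrow> sorted_rearr k x i = x (p i)"
proof -
  let ?L = "map x [0..<Suc k]"
  have "mset (sort ?L) = mset ?L" by simp
  then obtain p where p: "p permutes {..<length ?L}" "permute_list p ?L = sort ?L"
    by (rule mset_eq_permutation)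
  have "p permutes {..k}" using p(1) by (simp add: lessThan_Suc_atMost)
  moreover have "sorted_rearr k x i = x (p i)" if "i \<le> k" for i
  proof -
    have "sorted_rearr k x i = permute_list p ?L ! i" using p(2) by (simp add: sorted_rearr_def)
    also have "\<dots> = ?L ! p i" using that p(1) by (intro permute_list_nth) auto
    also have "\<dots> = x (p i)" using permutes_in_image[OF p(1), of i] that by (simp del: upt_Suc)
    finally show ?thesis .
  qed
  ultimately show ?thesis using that by blast
qed

lemma sorted_rearr_mono:
  assumes "i \<le> j" "j \<le> k"
  shows "sorted_rearr k x i \<le> sorted_rearr k x j"
  unfolding sorted_rearr_def
  using assms by (intro sorted_nth_mono) auto

lemma telescope:
  assumes "i \<le> k"
  shows "sorted_rearr k x i - sorted_rearr k x 0 = Gbar (gaps k x) i"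
  using assms
proof (induction i)
  case 0 then show ?case by (simp add: Gbar_def)
next
  case (Suc i)
  have "Gbar (gaps k x) (Suc i) = Gbar (gaps k x) i + gaps k x (Suc i)"
    by (simp add: Gbar_def)
  also have "gaps k x (Suc i) = sorted_rearr k x (Suc i) - sorted_rearr k x i"
    using Suc.prems by (simp add: gaps_def)
  finally show ?case using Suc by simp
qed

lemma x_via_gbar:
  fixes x :: "nat \<Rightarrow> real"
  obtains \<sigma> where "\<sigma> permutes {..k}" "\<And>j. j \<le> k \<Longrightarrow> x j = sorted_rearr k x 0 + Gbar (gaps k x) (\<sigma> j)"
proof -
  obtain p where p: "p permutes {..k}" "\<And>i. i \<le> k \<Longrightarrow> sorted_rearr k x i = x (p i)"
    using sort_perm_ex[of k x] by blast
  have "inv p permutes {..k}" using p(1) by (rule permutes_inv)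
  moreover have "x j = sorted_rearr k x 0 + Gbar (gaps k x) (inv p j)" if "j \<le> k" for j
  proof -
    have ij: "inv p j \<le> k" using permutes_in_image[OF \<open>inv p permutes {..k}\<close>] that by auto
    have "x j = x (p (inv p j))" using permutes_inverses(1)[OF p(1)] by simp
    also have "\<dots> = sorted_rearr k x (inv p j)" using p(2)[OF ij] by simp
    finally show ?thesis using telescope[OF ij, of x] by simp
  qed
  ultimately show ?thesis using that by blast
qed

definition orth :: "nat set \<Rightarrow> (nat \<Rightarrow> real) \<Rightarrow> (nat \<Rightarrow> real) set" where
  "orth I a = {x \<in> PiE I (\<lambda>_. UNIV). \<forall>i\<in>I. x i \<le> a i}"

lemma orth_unique:
  fixes P Q :: "(nat \<Rightarrow> real) measure"
  assumes finI: "finite I" and sP: "sets P = sets (PiM I (\<lambda>_. borel))" and sQ: "sets Q = sets (PiM I (\<lambda>_. borel))"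
    and fin: "finite_measure P"
    and eq: "\<And>a. emeasure P (orth I a) = emeasure Q (orth I a)"
  shows "P = Q"
proof -
  define E where "E = {{f\<in>PiE I (\<lambda>_. UNIV). \<forall>i\<in>j. f i \<in> A i} | A j. j \<in> {I} \<and> A \<in> Pi j (\<lambda>_. range (\<lambda>a::real. {..a}))}"
  have E_eq: "E = range (orth I)"
  proof (intro set_eqI iffI)
    fix X assume "X \<in> E"
    then obtain A where A: "A \<in> Pi I (\<lambda>_. range (\<lambda>a::real. {..a}))" and X: "X = {f\<in>PiE I (\<lambda>_. UNIV). \<forall>i\<in>I. f i \<in> A i}"
      unfolding E_def by blast
    have "\<forall>i\<in>I. \<exists>a. A i = {..a}" using A by blast
    then obtain a where "\<forall>i\<in>I. A i = {..a i}" by metis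
    then have "X = orth I a" unfolding X orth_def by auto
    then show "X \<in> range (orth I)" by blast
  next
    fix X assume "X \<in> range (orth I)"
    then obtain a where X: "X = orth I a" by blast
    show "X \<in> E" unfolding E_def X orth_def
      by (intro CollectI exI[of _ "\<lambda>i. {..a i}"] exI[of _ I]) auto
  qed
  have sets_eq: "sets (PiM I (\<lambda>_. borel)) = sigma_sets (PiE I (\<lambda>_. UNIV)) E"
  proof -
    have "sets (PiM I (\<lambda>_. borel :: real measure)) = sets (PiM I (\<lambda>_. sigma UNIV (range (\<lambda>a::real. {..a}))))"
      by (simp add: borel_eq_atMost[symmetric])
    also have "\<dots> = sets (sigma (PiE I (\<lambda>_. UNIV)) E)"
      unfolding E_def
      by (rule sets_PiM_sigma) (use finI in \<open>auto intro!: exI[of _ "range (\<lambda>n::nat. {..real n})"] simp: real_arch_simple\<close>)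
    also have "\<dots> = sigma_sets (PiE I (\<lambda>_. UNIV)) E"
      by (rule sets_measure_of) (auto simp: E_def)
    finally show ?thesis .
  qed
  show ?thesis
  proof (rule measure_eqI_generator_eq[where E=E and \<Omega>="PiE I (\<lambda>_. UNIV)" and A="\<lambda>n. orth I (\<lambda>_. real n)"])
    show "Int_stable E"
      unfolding E_eq
    proof (rule Int_stableI)
      fix X Y assume "X \<in> range (orth I)" "Y \<in> range (orth I)"
      then obtain a b where "X = orth I a" "Y = orth I b" by blast
      then have "X \<inter> Y = orth I (\<lambda>i. min (a i) (b i))" by (auto simp: orth_def)
      then show "X \<inter> Y \<in> range (orth I)" by blast
    qed
    show "E \<subseteq> Pow (PiE I (\<lambda>_. UNIV))" unfolding E_eq orth_def by auto
    show "\<And>X. X \<in> E \<Longrightarrow> emeasure P X = emeasure Q X" unfolding E_eq using eq by auto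
    show "sets P = sigma_sets (PiE I (\<lambda>_. UNIV)) E" using sP sets_eq by simp
    show "sets Q = sigma_sets (PiE I (\<lambda>_. UNIV)) E" using sQ sets_eq by simp
    show "range (\<lambda>n. orth I (\<lambda>_. real n)) \<subseteq> E" unfolding E_eq by auto
    show "(\<Union>n. orth I (\<lambda>_. real n)) = PiE I (\<lambda>_. UNIV)"
    proof (intro set_eqI iffI)
      fix x assume x: "x \<in> PiE I (\<lambda>_. UNIV :: real set)"
      obtain n :: nat where n: "Max (insert 0 (x ` I)) \<le> real n" using real_arch_simple by blast
      have "\<forall>i\<in>I. x i \<le> real n"
      proof
        fix i assume "i \<in> I"
        then have "x i \<le> Max (insert 0 (x ` I))" using finI by (intro Max_ge) auto
        then show "x i \<le> real n" using n by linarith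
      qed
      then show "x \<in> (\<Union>n. orth I (\<lambda>_. real n))" using x by (auto simp: orth_def)
    qed (auto simp: orth_def)
    show "\<And>n. emeasure P (orth I (\<lambda>_. real n)) \<noteq> \<infinity>"
      using fin by (simp add: finite_measure.emeasure_finite)
  qed
qed

lemma floor_approx:
  fixes y :: real
  shows "(\<lambda>m. real_of_int \<lfloor>real (Suc m) * y\<rfloor> / real (Suc m)) \<longlonglongrightarrow> y"
proof (rule tendsto_sandwich[where f="\<lambda>m. y - inverse (real (Suc m))" and h="\<lambda>m. y"])
  show "\<forall>\<^sub>F m in sequentially. y - inverse (real (Suc m)) \<le> real_of_int \<lfloor>real (Suc m) * y\<rfloor> / real (Suc m)"
  proof (intro always_eventually allI)
    fix m :: nat
    have c: "real (Suc m) > 0" by simp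
    have "real (Suc m) * y - 1 \<le> real_of_int \<lfloor>real (Suc m) * y\<rfloor>" by linarith
    then have "(real (Suc m) * y - 1) / real (Suc m) \<le> real_of_int \<lfloor>real (Suc m) * y\<rfloor> / real (Suc m)"
      using c by (intro divide_right_mono) auto
    moreover have "y - inverse (real (Suc m)) = (real (Suc m) * y - 1) / real (Suc m)"
      using c by (simp add: field_simps)
    ultimately show "y - inverse (real (Suc m)) \<le> real_of_int \<lfloor>real (Suc m) * y\<rfloor> / real (Suc m)"
      by simp
  qed
  show "\<forall>\<^sub>F m in sequentially. real_of_int \<lfloor>real (Suc m) * y\<rfloor> / real (Suc m) \<le> y"
  proof (intro always_eventually allI)
    fix m :: nat
    have c: "real (Suc m) > 0" by simp
    have "real_of_int \<lfloor>real (Suc m) * y\<rfloor> \<le> real (Suc m) * y" by linarith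
    then show "real_of_int \<lfloor>real (Suc m) * y\<rfloor> / real (Suc m) \<le> y"
      using c by (simp add: field_simps)
  qed
  show "(\<lambda>m. y - inverse (real (Suc m))) \<longlonglongrightarrow> y"
    using tendsto_diff[OF tendsto_const LIMSEQ_inverse_real_of_nat, of y] by simp
qed simp

lemma meas_comp_cont:
  fixes X :: "'a \<Rightarrow> real \<Rightarrow> real"
  assumes mX: "\<And>t. (\<lambda>\<omega>. X \<omega> t) \<in> borel_measurable M"
    and cX: "\<And>\<omega>. \<omega> \<in> space M \<Longrightarrow> continuous_on UNIV (X \<omega>)"
    and mY: "Y \<in> borel_measurable M"
  shows "(\<lambda>\<omega>. X \<omega> (Y \<omega>)) \<in> borel_measurable M"
proof (rule borel_measurable_LIMSEQ_real[where u="\<lambda>m \<omega>. X \<omega> (real_of_int \<lfloor>real (Suc m) * Y \<omega>\<rfloor> / real (Suc m))"])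
  fix m
  show "(\<lambda>\<omega>. X \<omega> (real_of_int \<lfloor>real (Suc m) * Y \<omega>\<rfloor> / real (Suc m))) \<in> borel_measurable M"
  proof (rule measurable_compose_countable[where f="\<lambda>z \<omega>. X \<omega> (real_of_int z / real (Suc m))" and g="\<lambda>\<omega>. \<lfloor>real (Suc m) * Y \<omega>\<rfloor>"])
    show "\<And>z::int. (\<lambda>\<omega>. X \<omega> (real_of_int z / real (Suc m))) \<in> borel_measurable M" using mX by simp
    show "(\<lambda>\<omega>. \<lfloor>real (Suc m) * Y \<omega>\<rfloor>) \<in> measurable M (count_space UNIV)"
      using mY by measurable
  qed
next
  fix \<omega> assume "\<omega> \<in> space M"
  then have "isCont (X \<omega>) (Y \<omega>)" using cX continuous_on_eq_continuous_at by blast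
  then show "(\<lambda>m. X \<omega> (real_of_int \<lfloor>real (Suc m) * Y \<omega>\<rfloor> / real (Suc m))) \<longlonglongrightarrow> X \<omega> (Y \<omega>)"
    using floor_approx isCont_tendsto_compose by blast
qed

lemma iter_BM_meas:
  assumes "iid_two_sided_BMs M B"
  shows "(\<lambda>\<omega>. iter_BM B n \<omega> s) \<in> borel_measurable M"
proof (induction n)
  case 0 then show ?case by simp
next
  case (Suc n)
  have bm: "two_sided_BM M (B n)" using assms by (simp add: iid_two_sided_BMs_def)
  show ?case
    using meas_comp_cont[of "B n" M "\<lambda>\<omega>. iter_BM B n \<omega> s"] bm Suc
    by (simp add: two_sided_BM_def)
qed

definition pm :: "nat \<Rightarrow> (nat \<Rightarrow> nat) \<Rightarrow> (nat \<Rightarrow> real) \<Rightarrow> (nat \<Rightarrow> real)" where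
  "pm k \<pi> x = (\<lambda>i\<in>{..k}. x (\<pi> i))"

definition phi :: "nat \<Rightarrow> real \<Rightarrow> real" where
  "phi m y = max 0 (min 1 (1 - real (Suc m) * y))"

definition TF :: "nat \<Rightarrow> (nat \<Rightarrow> nat) \<Rightarrow> (nat \<Rightarrow> real) \<Rightarrow> nat \<Rightarrow> (nat \<Rightarrow> real) \<Rightarrow> real" where
  "TF k c a m x = (\<Prod>i\<in>{..k}. phi m (x (c i) - a i))"

lemma phi_cont: "continuous_on UNIV (phi m)"
  unfolding phi_def by (intro continuous_intros)

lemma phi_bounds: "0 \<le> phi m y" "phi m y \<le> 1"
  unfolding phi_def by auto

lemma phi_lim: "(\<lambda>m. phi m y) \<longlonglongrightarrow> (if y \<le> 0 then 1 else 0)"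
proof (cases "y \<le> 0")
  case True
  have "phi m y = 1" for m
  proof -
    have "real (Suc m) * y \<le> 0" using True by (simp add: mult_nonneg_nonpos)
    then show ?thesis unfolding phi_def by auto
  qed
  then show ?thesis using True by simp
next
  case False
  obtain N :: nat where N: "inverse y < real N" using reals_Archimedean2 by blast
  have "eventually (\<lambda>m. phi m y = 0) sequentially"
    unfolding eventually_sequentially
  proof (intro exI allI impI)
    fix m assume "N \<le> m"
    then have "inverse y < real (Suc m)" using N by linarith
    then have "1 < real (Suc m) * y" using False
      by (simp add: field_simps)
    then show "phi m y = 0" unfolding phi_def by auto
  qed
  then show ?thesis using False by (simp add: tendsto_eventually)
qed

lemma TF_cont: "continuous_on S (TF k c a m)"
proof -
  have "continuous_on S (\<lambda>x. phi m (x (c i) - a i))" for i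
  proof (rule continuous_on_compose2[OF phi_cont])
    show "continuous_on S (\<lambda>x. x (c i) - a i)"
      by (intro continuous_intros continuous_on_subset[OF continuous_on_product_coordinates]) auto
  qed auto
  then show ?thesis unfolding TF_def by (intro continuous_on_prod) auto
qed

lemma TF_bounds: "0 \<le> TF k c a m x" "TF k c a m x \<le> 1"
  unfolding TF_def by (auto intro!: prod_nonneg prod_le_1 simp: phi_bounds)

lemma TF_bounded: "bounded (TF k c a m ` S)"
proof -
  have "\<And>x. norm (TF k c a m x) \<le> 1" using TF_bounds by (simp add: abs_le_iff)
  then show ?thesis unfolding bounded_iff by blast
qed

lemma TF_meas:
  assumes "c ` {..k} \<subseteq> {..k}"
  shows "TF k c a m \<in> borel_measurable (PiM {..k} (\<lambda>_. borel))"
proof -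
  have ph: "phi m \<in> borel_measurable borel" by (rule borel_measurable_continuous_onI[OF phi_cont])
  have "(\<lambda>x. phi m (x (c i) - a i)) \<in> borel_measurable (PiM {..k} (\<lambda>_. borel))" if "i \<le> k" for i
  proof (rule measurable_compose[OF _ ph])
    have "c i \<in> {..k}" using assms that by auto
    then show "(\<lambda>x. x (c i) - a i) \<in> borel_measurable (PiM {..k} (\<lambda>_. borel))" by measurable
  qed
  then show ?thesis unfolding TF_def by (intro borel_measurable_prod) auto
qed

lemma TF_lim: "(\<lambda>m. TF k c a m x) \<longlonglongrightarrow> indicator {x. \<forall>i\<in>{..k}. x (c i) \<le> a i} x"
proof -
  have "(\<lambda>m. TF k c a m x) \<longlonglongrightarrow> (\<Prod>i\<in>{..k}. if x (c i) - a i \<le> 0 then 1 else 0)"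
    unfolding TF_def by (intro tendsto_prod phi_lim)
  also have "(\<Prod>i\<in>{..k}. if x (c i) - a i \<le> 0 then 1 else (0::real)) = indicator {x. \<forall>i\<in>{..k}. x (c i) \<le> a i} x"
    by (auto simp: indicator_def)
  finally show ?thesis .
qed

lemma TF_int_lim:
  assumes P: "prob_space P" and sP: "sets P = sets (PiM {..k} (\<lambda>_. borel))"
    and c: "c ` {..k} \<subseteq> {..k}"
  shows "(\<lambda>m. \<integral>x. TF k c a m x \<partial>P) \<longlonglongrightarrow> measure P {x\<in>space P. \<forall>i\<in>{..k}. x (c i) \<le> a i}"
proof -
  interpret prob_space P by (rule P)
  have eqm: "measurable P borel = measurable (PiM {..k} (\<lambda>_. borel)) (borel::real measure)"
    by (rule measurable_cong_sets[OF sP refl])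
  have S: "{x\<in>space P. \<forall>i\<in>{..k}. x (c i) \<le> a i} \<in> sets P"
  proof -
    have "\<And>i. i \<in> {..k} \<Longrightarrow> {x\<in>space P. x (c i) \<le> a i} \<in> sets P"
    proof -
      fix i assume "i \<in> {..k}"
      then have "c i \<in> {..k}" using c by auto
      then have "(\<lambda>x. x (c i)) \<in> borel_measurable P"
        unfolding eqm by (rule measurable_component_singleton)
      then show "{x\<in>space P. x (c i) \<le> a i} \<in> sets P" by measurable
    qed
    then have "(\<Inter>i\<in>{..k}. {x\<in>space P. x (c i) \<le> a i}) \<in> sets P" by (intro sets.finite_INT) auto
    moreover have "(\<Inter>i\<in>{..k}. {x\<in>space P. x (c i) \<le> a i}) = {x\<in>space P. \<forall>i\<in>{..k}. x (c i) \<le> a i}"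
      by auto
    ultimately show ?thesis by simp
  qed
  have "(\<lambda>m. \<integral>x. TF k c a m x \<partial>P) \<longlonglongrightarrow> (\<integral>x. indicator {x\<in>space P. \<forall>i\<in>{..k}. x (c i) \<le> a i} x \<partial>P)"
  proof (rule integral_dominated_convergence[where w="\<lambda>_. 1"])
    show "indicator {x\<in>space P. \<forall>i\<in>{..k}. x (c i) \<le> a i} \<in> borel_measurable P"
      using S by simp
    show "\<And>m. TF k c a m \<in> borel_measurable P"
      unfolding eqm using TF_meas[OF c] by simp
    show "integrable P (\<lambda>_. 1::real)" by simp
    show "AE x in P. (\<lambda>m. TF k c a m x) \<longlonglongrightarrow> indicator {x\<in>space P. \<forall>i\<in>{..k}. x (c i) \<le> a i} x"
    proof (rule AE_I2)
      fix x assume "x \<in> space P"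
      then show "(\<lambda>m. TF k c a m x) \<longlonglongrightarrow> indicator {x\<in>space P. \<forall>i\<in>{..k}. x (c i) \<le> a i} x"
        using TF_lim[of k c a x] by (simp add: indicator_def)
    qed
    show "\<And>m. AE x in P. norm (TF k c a m x) \<le> 1"
      using TF_bounds by (intro AE_I2) (simp add: abs_le_iff)
  qed
  moreover have "(\<integral>x. indicator {x\<in>space P. \<forall>i\<in>{..k}. x (c i) \<le> a i} x \<partial>P) = measure P {x\<in>space P. \<forall>i\<in>{..k}. x (c i) \<le> a i}"
    by (simp add: Int_absorb2)
  ultimately show ?thesis by simp
qed

lemma orth_sets: "orth {..k} a \<in> sets (PiM {..k} (\<lambda>_. borel))"
proof -
  let ?N = "PiM {..k} (\<lambda>_. borel) :: (nat \<Rightarrow> real) measure"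
  have "\<And>i. i \<in> {..k} \<Longrightarrow> {x\<in>space ?N. x i \<le> a i} \<in> sets ?N" by measurable
  then have "(\<Inter>i\<in>{..k}. {x\<in>space ?N. x i \<le> a i}) \<in> sets ?N" by (intro sets.finite_INT) auto
  moreover have "(\<Inter>i\<in>{..k}. {x\<in>space ?N. x i \<le> a i}) = orth {..k} a"
    by (auto simp: orth_def space_PiM)
  ultimately show ?thesis by simp
qed

lemma pm_meas:
  assumes \<pi>: "\<pi> permutes {..k}"
  shows "pm k \<pi> \<in> measurable (PiM {..k} (\<lambda>_. borel)) (PiM {..k} (\<lambda>_. borel :: real measure))"
  unfolding pm_def
  by (intro measurable_restrict measurable_component_singleton) (use permutes_in_image[OF \<pi>] in auto)

lemma exch:
  assumes iid: "iid_two_sided_BMs M B" and mu: "is_mu M B (Suc k) \<mu>" and \<pi>: "\<pi> permutes {..k}"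
  shows "distr \<mu> (PiM {..k} (\<lambda>_. borel)) (pm k \<pi>) = \<mu>"
proof -
  let ?N = "PiM {..k} (\<lambda>_. borel) :: (nat \<Rightarrow> real) measure"
  have all: "sets \<mu> = sets ?N \<and> prob_space \<mu> \<and> (\<forall>t. inj_on t {..k} \<and> (\<forall>i<Suc k. t i \<noteq> 0) \<longrightarrow>
      (\<forall>f::(nat \<Rightarrow> real) \<Rightarrow> real. continuous_on (PiE {..k} (\<lambda>_. UNIV)) f \<longrightarrow> bounded (f ` PiE {..k} (\<lambda>_. UNIV)) \<longrightarrow>
       (\<lambda>n. \<integral>x. f x \<partial>distr M ?N (\<lambda>\<omega>. \<lambda>i\<in>{..k}. iter_BM B n \<omega> (t i))) \<longlonglongrightarrow> (\<integral>x. f x \<partial>\<mu>)))"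
    using mu unfolding is_mu_def conv_in_distr_def lessThan_Suc_atMost .
  have s\<mu>: "sets \<mu> = sets ?N" and p\<mu>: "prob_space \<mu>" using all by simp_all
  have C: "\<forall>t. inj_on t {..k} \<and> (\<forall>i<Suc k. t i \<noteq> 0) \<longrightarrow>
      (\<forall>f::(nat \<Rightarrow> real) \<Rightarrow> real. continuous_on (PiE {..k} (\<lambda>_. UNIV)) f \<longrightarrow> bounded (f ` PiE {..k} (\<lambda>_. UNIV)) \<longrightarrow>
       (\<lambda>n. \<integral>x. f x \<partial>distr M ?N (\<lambda>\<omega>. \<lambda>i\<in>{..k}. iter_BM B n \<omega> (t i))) \<longlonglongrightarrow> (\<integral>x. f x \<partial>\<mu>))"
    by (rule conjunct2[OF conjunct2[OF all]])
  have conv: "(\<lambda>n. \<integral>x. f x \<partial>distr M ?N (\<lambda>\<omega>. \<lambda>i\<in>{..k}. iter_BM B n \<omega> (t i))) \<longlonglongrightarrow> (\<integral>x. f x \<partial>\<mu>)"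
    if "inj_on t {..k}" "\<forall>i<Suc k. t i \<noteq> 0" "continuous_on (PiE {..k} (\<lambda>_. UNIV)) (f::(nat \<Rightarrow> real) \<Rightarrow> real)"
       "bounded (f ` PiE {..k} (\<lambda>_. UNIV))" for t f
    using C[rule_format, of t f] that by blast
  define T where "T t n = (\<lambda>\<omega>. \<lambda>i\<in>{..k}. iter_BM B n \<omega> (t i))" for t :: "nat \<Rightarrow> real" and n
  have Tm: "T t n \<in> measurable M ?N" for t n
    unfolding T_def by (intro measurable_restrict iter_BM_meas[OF iid])
  have pmm: "pm k \<pi> \<in> measurable ?N ?N" by (rule pm_meas[OF \<pi>])
  define t0 where "t0 i = real (Suc i)" for i
  define t1 where "t1 = t0 \<circ> \<pi>"
  have inj0: "inj_on t0 {..k}" by (auto simp: t0_def inj_on_def)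
  have inj1: "inj_on t1 {..k}" unfolding t1_def
    by (rule comp_inj_on) (use permutes_inj_on[OF \<pi>] permutes_image[OF \<pi>] inj0 in auto)
  have nz0: "\<forall>i<Suc k. t0 i \<noteq> 0" and nz1: "\<forall>i<Suc k. t1 i \<noteq> 0" by (auto simp: t0_def t1_def)
  have T1: "T t1 n = pm k \<pi> \<circ> T t0 n" for n
  proof
    fix \<omega>
    show "T t1 n \<omega> = (pm k \<pi> \<circ> T t0 n) \<omega>"
      using permutes_in_image[OF \<pi>] by (auto simp: T_def pm_def t1_def fun_eq_iff)
  qed
  have key: "(\<integral>x. TF k c a m x \<partial>\<mu>) = (\<integral>x. TF k (\<pi> \<circ> c) a m x \<partial>\<mu>)" if c: "c ` {..k} \<subseteq> {..k}" for c a m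
  proof -
    have pc: "(\<pi> \<circ> c) ` {..k} \<subseteq> {..k}" using c permutes_in_image[OF \<pi>] by auto
    have L1: "(\<lambda>n. \<integral>x. TF k c a m x \<partial>distr M ?N (T t1 n)) \<longlonglongrightarrow> (\<integral>x. TF k c a m x \<partial>\<mu>)"
      unfolding T_def by (rule conv[OF inj1 nz1 TF_cont TF_bounded])
    have L0: "(\<lambda>n. \<integral>x. TF k (\<pi> \<circ> c) a m x \<partial>distr M ?N (T t0 n)) \<longlonglongrightarrow> (\<integral>x. TF k (\<pi> \<circ> c) a m x \<partial>\<mu>)"
      unfolding T_def by (rule conv[OF inj0 nz0 TF_cont TF_bounded])
    have eq: "(\<integral>x. TF k c a m x \<partial>distr M ?N (T t1 n)) = (\<integral>x. TF k (\<pi> \<circ> c) a m x \<partial>distr M ?N (T t0 n))" for n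
    proof -
      have pmd: "pm k \<pi> \<in> measurable (distr M ?N (T t0 n)) ?N"
        using pmm measurable_cong_sets[of "distr M ?N (T t0 n)" ?N ?N ?N] by simp
      have "distr M ?N (T t1 n) = distr (distr M ?N (T t0 n)) ?N (pm k \<pi>)"
        unfolding T1 by (rule distr_distr[OF pmm Tm, symmetric])
      then have "(\<integral>x. TF k c a m x \<partial>distr M ?N (T t1 n)) = (\<integral>x. TF k c a m (pm k \<pi> x) \<partial>distr M ?N (T t0 n))"
        using integral_distr[OF pmd TF_meas[OF c]] by simp
      also have "\<dots> = (\<integral>x. TF k (\<pi> \<circ> c) a m x \<partial>distr M ?N (T t0 n))"
      proof (rule Bochner_Integration.integral_cong[OF refl])
        fix x show "TF k c a m (pm k \<pi> x) = TF k (\<pi> \<circ> c) a m x"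
          unfolding TF_def pm_def using c by (intro prod.cong) auto
      qed
      finally show ?thesis .
    qed
    show ?thesis using L1 L0 unfolding eq by (rule LIMSEQ_unique)
  qed
  have sp: "space \<mu> = PiE {..k} (\<lambda>_. UNIV)" using sets_eq_imp_space_eq[OF s\<mu>] by (simp add: space_PiM)
  have pmm': "pm k \<pi> \<in> measurable \<mu> ?N" using pmm measurable_cong_sets[OF s\<mu> refl, of ?N] by simp
  interpret P: prob_space \<mu> by (rule p\<mu>)
  have pd: "prob_space (distr \<mu> ?N (pm k \<pi>))" by (rule P.prob_space_distr[OF pmm'])
  have meq: "measure \<mu> (orth {..k} a) = measure (distr \<mu> ?N (pm k \<pi>)) (orth {..k} a)" for a
  proof -
    have id: "(\<lambda>i::nat. i) ` {..k} \<subseteq> {..k}" by auto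
    have pimg: "\<pi> ` {..k} \<subseteq> {..k}" using permutes_image[OF \<pi>] by simp
    have l1: "(\<lambda>m. \<integral>x. TF k (\<lambda>i. i) a m x \<partial>\<mu>) \<longlonglongrightarrow> measure \<mu> {x\<in>space \<mu>. \<forall>i\<in>{..k}. x i \<le> a i}"
      by (rule TF_int_lim[OF p\<mu> s\<mu> id])
    have l2: "(\<lambda>m. \<integral>x. TF k \<pi> a m x \<partial>\<mu>) \<longlonglongrightarrow> measure \<mu> {x\<in>space \<mu>. \<forall>i\<in>{..k}. x (\<pi> i) \<le> a i}"
      by (rule TF_int_lim[OF p\<mu> s\<mu> pimg])
    have eqf: "(\<lambda>m. \<integral>x. TF k (\<lambda>i. i) a m x \<partial>\<mu>) = (\<lambda>m. \<integral>x. TF k \<pi> a m x \<partial>\<mu>)"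
    proof
      fix m show "(\<integral>x. TF k (\<lambda>i. i) a m x \<partial>\<mu>) = (\<integral>x. TF k \<pi> a m x \<partial>\<mu>)"
        using key[OF id, of a m] by (simp only: o_def)
    qed
    have e1: "measure \<mu> {x\<in>space \<mu>. \<forall>i\<in>{..k}. x i \<le> a i} = measure \<mu> {x\<in>space \<mu>. \<forall>i\<in>{..k}. x (\<pi> i) \<le> a i}"
      using l1 l2 unfolding eqf by (rule LIMSEQ_unique)
    have e2: "{x\<in>space \<mu>. \<forall>i\<in>{..k}. x i \<le> a i} = orth {..k} a"
      unfolding sp orth_def by (rule refl)
    have e3: "measure (distr \<mu> ?N (pm k \<pi>)) (orth {..k} a) = measure \<mu> (pm k \<pi> -` orth {..k} a \<inter> space \<mu>)"
      by (rule measure_distr[OF pmm' orth_sets])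
    have e4: "pm k \<pi> -` orth {..k} a \<inter> space \<mu> = {x\<in>space \<mu>. \<forall>i\<in>{..k}. x (\<pi> i) \<le> a i}"
    proof (intro set_eqI iffI)
      fix x assume "x \<in> pm k \<pi> -` orth {..k} a \<inter> space \<mu>"
      then have x: "x \<in> space \<mu>" "\<forall>i\<in>{..k}. pm k \<pi> x i \<le> a i" unfolding orth_def by blast+
      have "\<forall>i\<in>{..k}. x (\<pi> i) \<le> a i"
      proof
        fix i assume i: "i \<in> {..k}"
        have "pm k \<pi> x i = x (\<pi> i)" using i unfolding pm_def by (rule restrict_apply')
        then show "x (\<pi> i) \<le> a i" using x(2) i by metis
      qed
      then show "x \<in> {x\<in>space \<mu>. \<forall>i\<in>{..k}. x (\<pi> i) \<le> a i}" using x(1) by blast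
    next
      fix x assume x: "x \<in> {x\<in>space \<mu>. \<forall>i\<in>{..k}. x (\<pi> i) \<le> a i}"
      have "pm k \<pi> x \<in> PiE {..k} (\<lambda>_. UNIV)" unfolding pm_def by simp
      moreover have "\<forall>i\<in>{..k}. pm k \<pi> x i \<le> a i"
      proof
        fix i assume i: "i \<in> {..k}"
        have "pm k \<pi> x i = x (\<pi> i)" using i unfolding pm_def by (rule restrict_apply')
        then show "pm k \<pi> x i \<le> a i" using x i by simp
      qed
      ultimately show "x \<in> pm k \<pi> -` orth {..k} a \<inter> space \<mu>" using x unfolding orth_def by blast
    qed
    have "measure \<mu> (orth {..k} a) = measure \<mu> {x\<in>space \<mu>. \<forall>i\<in>{..k}. x i \<le> a i}" by (simp only: e2)
    also have "\<dots> = measure \<mu> {x\<in>space \<mu>. \<forall>i\<in>{..k}. x (\<pi> i) \<le> a i}" by (rule e1)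
    also have "\<dots> = measure \<mu> (pm k \<pi> -` orth {..k} a \<inter> space \<mu>)" by (simp only: e4)
    also have "\<dots> = measure (distr \<mu> ?N (pm k \<pi>)) (orth {..k} a)" by (rule e3[symmetric])
    finally show ?thesis .
  qed
  show ?thesis
  proof (rule orth_unique[of "{..k}", symmetric])
    show "finite {..k}" by simp
    show "sets \<mu> = sets ?N" by (rule s\<mu>)
    show "sets (distr \<mu> ?N (pm k \<pi>)) = sets ?N" by simp
    show "finite_measure \<mu>" by (rule P.finite_measure_axioms)
    show "emeasure \<mu> (orth {..k} a) = emeasure (distr \<mu> ?N (pm k \<pi>)) (orth {..k} a)" for a
    proof -
      interpret Q: prob_space "distr \<mu> ?N (pm k \<pi>)" by (rule pd)
      show ?thesis using meq[of a] P.emeasure_eq_measure Q.emeasure_eq_measure by simp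
    qed
  qed
qed

lemma comp_any: "(\<lambda>x. x j) \<in> borel_measurable (PiM I (\<lambda>_. borel :: real measure))"
proof (cases "j \<in> I")
  case True then show ?thesis by (rule measurable_component_singleton)
next
  case False
  have "(\<lambda>x. undefined :: real) \<in> borel_measurable (PiM I (\<lambda>_. borel :: real measure))" by simp
  then show ?thesis
    by (rule measurable_cong[THEN iffD1, rotated]) (use False in \<open>auto simp: space_PiM PiE_def extensional_def\<close>)
qed

lemma piecewise_meas:
  fixes f :: "'a \<Rightarrow> real"
  assumes "finite P" "\<And>p. p \<in> P \<Longrightarrow> E p \<in> sets M" "\<And>p. p \<in> P \<Longrightarrow> g p \<in> borel_measurable M"
    "\<And>x. x \<in> space M \<Longrightarrow> \<exists>p\<in>P. x \<in> E p" "\<And>p x. p \<in> P \<Longrightarrow> x \<in> E p \<Longrightarrow> x \<in> space M \<Longrightarrow> f x = g p x"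
  shows "f \<in> borel_measurable M"
proof (rule measurableI)
  show "\<And>x. x \<in> space M \<Longrightarrow> f x \<in> space borel" by simp
  fix A :: "real set" assume A: "A \<in> sets borel"
  have "f -` A \<inter> space M = (\<Union>p\<in>P. g p -` A \<inter> space M \<inter> E p)"
  proof (intro set_eqI iffI)
    fix x assume x: "x \<in> f -` A \<inter> space M"
    then obtain p where p: "p \<in> P" "x \<in> E p" using assms(4) by blast
    then have "f x = g p x" using assms(5) x by blast
    then show "x \<in> (\<Union>p\<in>P. g p -` A \<inter> space M \<inter> E p)" using x p by auto
  next
    fix x assume "x \<in> (\<Union>p\<in>P. g p -` A \<inter> space M \<inter> E p)"
    then obtain p where p: "p \<in> P" "x \<in> E p" "x \<in> space M" "g p x \<in> A" by blast
    then have "f x = g p x" using assms(5) by blast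
    then show "x \<in> f -` A \<inter> space M" using p by auto
  qed
  moreover have "(\<Union>p\<in>P. g p -` A \<inter> space M \<inter> E p) \<in> sets M"
  proof (rule sets.finite_UN[OF assms(1)])
    fix p assume p: "p \<in> P"
    show "g p -` A \<inter> space M \<inter> E p \<in> sets M"
      by (rule sets.Int[OF measurable_sets[OF assms(3)[OF p] A] assms(2)[OF p]])
  qed
  ultimately show "f -` A \<inter> space M \<in> sets M" by simp
qed

lemma sr_on_E:
  fixes x :: "nat \<Rightarrow> real"
  assumes p: "p permutes {..k}" and E: "\<forall>j<k. x (p j) \<le> x (p (Suc j))" and i: "i \<le> k"
  shows "sorted_rearr k x i = x (p i)"
proof -
  let ?L = "map x [0..<Suc k]"
  have p': "p permutes {..<length ?L}" using p by (simp add: lessThan_Suc_atMost)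
  have nth: "permute_list p ?L ! j = x (p j)" if "j \<le> k" for j
  proof -
    have "permute_list p ?L ! j = ?L ! p j" using p' that by (intro permute_list_nth) auto
    also have "\<dots> = x (p j)" using permutes_in_image[OF p, of j] that by (simp del: upt_Suc)
    finally show ?thesis .
  qed
  have "sort ?L = permute_list p ?L"
  proof (rule properties_for_sort)
    show "mset (permute_list p ?L) = mset ?L" using p' by (rule mset_permute_list)
    show "sorted (permute_list p ?L)"
      unfolding sorted_iff_nth_Suc using nth E by simp
  qed
  then show ?thesis using nth[OF i] by (simp add: sorted_rearr_def)
qed

lemma sr_meas:
  assumes i: "i \<le> k"
  shows "(\<lambda>x. sorted_rearr k x i) \<in> borel_measurable (PiM {..k} (\<lambda>_. borel))"
proof (rule piecewise_meas[where P="{p. p permutes {..k}}"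
      and E="\<lambda>p. {x\<in>space (PiM {..k} (\<lambda>_. borel)). \<forall>j<k. x (p j) \<le> x (p (Suc j))}"
      and g="\<lambda>p x. x (p i)"])
  show "finite {p. p permutes {..k}}" by (rule finite_permutations) simp
  show "{x\<in>space (PiM {..k} (\<lambda>_. borel :: real measure)). \<forall>j<k. x (p j) \<le> x (p (Suc j))} \<in> sets (PiM {..k} (\<lambda>_. borel))" for p
  proof -
    have "{x\<in>space (PiM {..k} (\<lambda>_. borel :: real measure)). \<forall>j\<in>{..<k}. x (p j) \<le> x (p (Suc j))} \<in> sets (PiM {..k} (\<lambda>_. borel))"
    proof (rule sets.sets_Collect_finite_All)
      fix j
      have m1[measurable]: "(\<lambda>x. x (p j)) \<in> borel_measurable (PiM {..k} (\<lambda>_. borel :: real measure))" by (rule comp_any)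
      have m2[measurable]: "(\<lambda>x. x (p (Suc j))) \<in> borel_measurable (PiM {..k} (\<lambda>_. borel :: real measure))" by (rule comp_any)
      show "{x\<in>space (PiM {..k} (\<lambda>_. borel :: real measure)). x (p j) \<le> x (p (Suc j))} \<in> sets (PiM {..k} (\<lambda>_. borel))"
        by (rule borel_measurable_le[OF m1 m2])
    qed simp
    then show ?thesis unfolding Ball_def lessThan_iff .
  qed
  show "(\<lambda>x::nat\<Rightarrow>real. x (p i)) \<in> borel_measurable (PiM {..k} (\<lambda>_. borel))" for p
    by (rule comp_any)
  fix x :: "nat \<Rightarrow> real" assume x: "x \<in> space (PiM {..k} (\<lambda>_. borel))"
  obtain p where p: "p permutes {..k}" "\<And>i. i \<le> k \<Longrightarrow> sorted_rearr k x i = x (p i)"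
    using sort_perm_ex[of k x] by blast
  have "\<forall>j<k. x (p j) \<le> x (p (Suc j))"
  proof (intro allI impI)
    fix j assume "j < k"
    then show "x (p j) \<le> x (p (Suc j))" using p(2)[of j] p(2)[of "Suc j"] sorted_rearr_mono[of j "Suc j" k x] by simp
  qed
  then show "\<exists>p\<in>{p. p permutes {..k}}. x \<in> {x\<in>space (PiM {..k} (\<lambda>_. borel)). \<forall>j<k. x (p j) \<le> x (p (Suc j))}"
    using p(1) x by (intro bexI[of _ p]) auto
next
  fix p and x :: "nat \<Rightarrow> real" assume "p \<in> {p. p permutes {..k}}" "x \<in> {x\<in>space (PiM {..k} (\<lambda>_. borel)). \<forall>j<k. x (p j) \<le> x (p (Suc j))}"
  then have "p permutes {..k}" "\<forall>j<k. x (p j) \<le> x (p (Suc j))" by auto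
  then show "sorted_rearr k x i = x (p i)" by (rule sr_on_E[OF _ _ i])
qed

lemma gaps_meas: "gaps k \<in> measurable (PiM {..k} (\<lambda>_. borel)) (PiM {1..k} (\<lambda>_. borel))"
  unfolding gaps_def
  by (intro measurable_restrict borel_measurable_diff sr_meas) auto

lemma Gbar_meas[measurable]: "(\<lambda>g. Gbar g m) \<in> borel_measurable (PiM I (\<lambda>_. borel))"
  unfolding Gbar_def by (intro borel_measurable_sum comp_any)

lemma comb:
  fixes x :: "nat \<Rightarrow> real" and \<Phi> :: "(nat \<Rightarrow> real) \<Rightarrow> 'b::comm_monoid_add"
  shows "(\<Sum>\<pi>\<in>{p. p permutes {..k}}. \<Sum>u\<in>{..k}. \<Phi> (\<lambda>i\<in>{..k}. x (\<pi> i) - x (\<pi> u)))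
       = (\<Sum>\<tau>\<in>{p. p permutes {..k}}. \<Sum>u\<in>{..k}. \<Phi> (\<lambda>i\<in>{..k}. Gbar (gaps k x) (\<tau> i) - Gbar (gaps k x) u))"
proof -
  obtain \<sigma> where \<sigma>: "\<sigma> permutes {..k}" "\<And>j. j \<le> k \<Longrightarrow> x j = sorted_rearr k x 0 + Gbar (gaps k x) (\<sigma> j)"
    using x_via_gbar[of k x] by blast
  define W where "W \<tau> = (\<Sum>u\<in>{..k}. \<Phi> (\<lambda>i\<in>{..k}. Gbar (gaps k x) (\<tau> i) - Gbar (gaps k x) u))" for \<tau>
  have step: "(\<Sum>u\<in>{..k}. \<Phi> (\<lambda>i\<in>{..k}. x (\<pi> i) - x (\<pi> u))) = W (\<sigma> \<circ> \<pi>)" if \<pi>: "\<pi> permutes {..k}" for \<pi>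
  proof -
    have sp: "\<sigma> \<circ> \<pi> permutes {..k}" using permutes_compose[OF \<pi> \<sigma>(1)] .
    have "(\<Sum>u\<in>{..k}. \<Phi> (\<lambda>i\<in>{..k}. x (\<pi> i) - x (\<pi> u)))
        = (\<Sum>u\<in>{..k}. \<Phi> (\<lambda>i\<in>{..k}. Gbar (gaps k x) ((\<sigma> \<circ> \<pi>) i) - Gbar (gaps k x) ((\<sigma> \<circ> \<pi>) u)))"
    proof (rule sum.cong[OF refl])
      fix u assume u: "u \<in> {..k}"
      have "(\<lambda>i\<in>{..k}. x (\<pi> i) - x (\<pi> u)) = (\<lambda>i\<in>{..k}. Gbar (gaps k x) ((\<sigma> \<circ> \<pi>) i) - Gbar (gaps k x) ((\<sigma> \<circ> \<pi>) u))"
      proof (rule restrict_ext)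
        fix i assume i: "i \<in> {..k}"
        have "\<pi> i \<le> k" "\<pi> u \<le> k" using permutes_in_image[OF \<pi>] i u by auto
        then show "x (\<pi> i) - x (\<pi> u) = Gbar (gaps k x) ((\<sigma> \<circ> \<pi>) i) - Gbar (gaps k x) ((\<sigma> \<circ> \<pi>) u)"
          using \<sigma>(2) by simp
      qed
      then show "\<Phi> (\<lambda>i\<in>{..k}. x (\<pi> i) - x (\<pi> u)) = \<Phi> (\<lambda>i\<in>{..k}. Gbar (gaps k x) ((\<sigma> \<circ> \<pi>) i) - Gbar (gaps k x) ((\<sigma> \<circ> \<pi>) u))"
        by simp
    qed
    also have "\<dots> = W (\<sigma> \<circ> \<pi>)"
      unfolding W_def
      by (rule sum.reindex_bij_betw[OF permutes_imp_bij[OF sp], where g="\<lambda>v. \<Phi> (\<lambda>i\<in>{..k}. Gbar (gaps k x) ((\<sigma> \<circ> \<pi>) i) - Gbar (gaps k x) v)"])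
    finally show ?thesis .
  qed
  have "(\<Sum>\<pi>\<in>{p. p permutes {..k}}. \<Sum>u\<in>{..k}. \<Phi> (\<lambda>i\<in>{..k}. x (\<pi> i) - x (\<pi> u)))
      = (\<Sum>\<pi>\<in>{p. p permutes {..k}}. W (\<sigma> \<circ> \<pi>))"
    using step by (intro sum.cong) auto
  also have "\<dots> = (\<Sum>\<pi>\<in>{p. p permutes {..k}}. W \<pi>)"
    by (rule setum_permutations_compose_left[OF \<sigma>(1), symmetric])
  finally show ?thesis unfolding W_def .
qed

lemma pmf_meas_any: "(f :: 'a \<Rightarrow> 'b) \<in> measurable (measure_pmf p) (count_space UNIV)"
  by simp

theorem proposition4:
  fixes M :: "'a measure" and B :: "nat \<Rightarrow> 'a \<Rightarrow> real \<Rightarrow> real"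
    and \<mu> :: "(nat \<Rightarrow> real) measure" and k :: nat
  assumes "iid_two_sided_BMs M B"
    and "is_mu M B (Suc k) \<mu>"
    and "k \<ge> 1"
  shows "distr (gamma k \<mu> \<Otimes>\<^sub>M (measure_pmf (pmf_of_set {..k}) \<Otimes>\<^sub>M
                 measure_pmf (pmf_of_set {p. p permutes {..k}})))
            (Pi\<^sub>M {..k} (\<lambda>_. borel))
            (\<lambda>(g, u, \<tau>). \<lambda>i\<in>{..k}. Gbar g (\<tau> i) - Gbar g u)
       = distr (\<mu> \<Otimes>\<^sub>M measure_pmf (pmf_of_set {..k}))
            (Pi\<^sub>M {..k} (\<lambda>_. borel))
            (\<lambda>(x, u). \<lambda>i\<in>{..k}. x i - x u)"
proof -
  let ?N = "PiM {..k} (\<lambda>_. borel) :: (nat \<Rightarrow> real) measure"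
  let ?G = "PiM {1..k} (\<lambda>_. borel) :: (nat \<Rightarrow> real) measure"
  define S where "S = {p. p permutes {..k}}"
  have finS: "finite S" unfolding S_def by (rule finite_permutations) simp
  have neS: "S \<noteq> {}" unfolding S_def using permutes_id by blast
  define U where "U = pmf_of_set {..k::nat}"
  define T where "T = pmf_of_set S"
  have setU: "set_pmf U = {..k}" unfolding U_def by simp
  have setT: "set_pmf T = S" unfolding T_def using finS neS by simp
  have pU: "pmf U u = 1 / real (Suc k)" if "u \<in> {..k}" for u
    unfolding U_def using that by simp
  have pT: "pmf T \<tau> = 1 / real (card S)" if "\<tau> \<in> S" for \<tau>
    unfolding T_def using that finS neS by simp
  have sumT: "(\<Sum>\<pi>\<in>S. ennreal (pmf T \<pi>)) = 1"
  proof -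
    have "(\<Sum>\<pi>\<in>S. pmf T \<pi>) = 1" using finS setT by (intro sum_pmf_eq_1) auto
    then show ?thesis by (simp add: sum_ennreal)
  qed
  have s\<mu>: "sets \<mu> = sets ?N"
    using conjunct1[OF assms(2)[unfolded is_mu_def]] by (simp only: lessThan_Suc_atMost)
  have p\<mu>: "prob_space \<mu>"
    using conjunct1[OF conjunct2[OF assms(2)[unfolded is_mu_def]]] .
  have eqB: "measurable \<mu> (borel :: real measure) = measurable ?N borel"
    by (rule measurable_cong_sets[OF s\<mu> refl])
  have eqBe: "measurable \<mu> (borel :: ennreal measure) = measurable ?N borel"
    by (rule measurable_cong_sets[OF s\<mu> refl])
  have eqNN: "measurable \<mu> ?N = measurable ?N ?N"
    by (rule measurable_cong_sets[OF s\<mu> refl])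
  have eqNG: "measurable \<mu> ?G = measurable ?N ?G"
    by (rule measurable_cong_sets[OF s\<mu> refl])
  have gm: "gaps k \<in> measurable \<mu> ?G"
    unfolding eqNG by (rule gaps_meas)
  have sg: "sets (gamma k \<mu>) = sets ?G" by (simp add: gamma_def)
  have pg: "prob_space (gamma k \<mu>)" unfolding gamma_def by (rule prob_space.prob_space_distr[OF p\<mu> gm])
  have pUT: "prob_space (measure_pmf U \<Otimes>\<^sub>M measure_pmf T)"
    by (intro prob_space_pair prob_space_measure_pmf)
  have sfUT: "sigma_finite_measure (measure_pmf U \<Otimes>\<^sub>M measure_pmf T)"
    by (rule prob_space_imp_sigma_finite[OF pUT])
  have sfT: "sigma_finite_measure (measure_pmf T)"
    by (rule prob_space_imp_sigma_finite[OF prob_space_measure_pmf])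
  have sfU: "sigma_finite_measure (measure_pmf U)"
    by (rule prob_space_imp_sigma_finite[OF prob_space_measure_pmf])
  define X where "X = gamma k \<mu> \<Otimes>\<^sub>M (measure_pmf U \<Otimes>\<^sub>M measure_pmf T)"
  define Fm where "Fm = (\<lambda>(g, u, \<tau>). \<lambda>i\<in>{..k}. Gbar g (\<tau> i) - Gbar g u)"
  define Hm where "Hm = (\<lambda>(x, u). \<lambda>i\<in>{..k}. (x::nat\<Rightarrow>real) i - x u)"
  have Gg: "(\<lambda>g. Gbar g m) \<in> borel_measurable (gamma k \<mu>)" for m
  proof -
    have eqG: "measurable (gamma k \<mu>) (borel :: real measure) = measurable ?G borel"
      by (rule measurable_cong_sets[OF sg refl])
    show ?thesis unfolding eqG by (rule Gbar_meas)
  qed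
  have A1: "(\<lambda>z. Gbar (fst z) m) \<in> borel_measurable X" for m
    unfolding X_def by (rule measurable_compose[OF measurable_fst Gg])
  have gu: "(\<lambda>z. fst (snd z)) \<in> measurable X (count_space UNIV)"
    unfolding X_def by (rule measurable_compose[OF measurable_snd measurable_compose[OF measurable_fst pmf_meas_any]])
  have gt: "(\<lambda>z. snd (snd z) i) \<in> measurable X (count_space UNIV)" for i
    unfolding X_def by (rule measurable_compose[OF measurable_snd measurable_compose[OF measurable_snd pmf_meas_any]])
  have Fm_alt: "Fm = (\<lambda>z. \<lambda>i\<in>{..k}. Gbar (fst z) (snd (snd z) i) - Gbar (fst z) (fst (snd z)))"
    unfolding Fm_def by (auto simp: fun_eq_iff split: prod.splits)
  have Fmeas: "Fm \<in> measurable X ?N"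
    unfolding Fm_alt
  proof (rule measurable_restrict)
    fix i
    have s1: "(\<lambda>z. Gbar (fst z) m - Gbar (fst z) (fst (snd z))) \<in> borel_measurable X" for m
      using measurable_compose_countable[where f="\<lambda>u z. Gbar (fst z) m - Gbar (fst z) u", OF borel_measurable_diff[OF A1 A1] gu]
      by simp
    show "(\<lambda>z. Gbar (fst z) (snd (snd z) i) - Gbar (fst z) (fst (snd z))) \<in> borel_measurable X"
      using measurable_compose_countable[where f="\<lambda>m z. Gbar (fst z) m - Gbar (fst z) (fst (snd z))", OF s1 gt]
      by simp
  qed
  have Hm_alt: "Hm = (\<lambda>z. \<lambda>i\<in>{..k}. fst z i - fst z (snd z))"
    unfolding Hm_def by (auto simp: fun_eq_iff split: prod.splits)
  have cm: "(\<lambda>x. x j) \<in> borel_measurable \<mu>" for j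
    unfolding eqB by (rule comp_any)
  have Hmeas: "Hm \<in> measurable (\<mu> \<Otimes>\<^sub>M measure_pmf U) ?N"
    unfolding Hm_alt
  proof (rule measurable_restrict)
    fix i
    have h1: "(\<lambda>z. fst z j) \<in> borel_measurable (\<mu> \<Otimes>\<^sub>M measure_pmf U)" for j
      by (rule measurable_compose[OF measurable_fst cm])
    have h2: "snd \<in> measurable (\<mu> \<Otimes>\<^sub>M measure_pmf U) (count_space UNIV)"
      by (rule measurable_compose[OF measurable_snd pmf_meas_any])
    show "(\<lambda>z. fst z i - fst z (snd z)) \<in> borel_measurable (\<mu> \<Otimes>\<^sub>M measure_pmf U)"
      using measurable_compose_countable[where f="\<lambda>u z. fst z i - fst z u", OF borel_measurable_diff[OF h1 h1] h2]
      by simp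
  qed
  have main: "distr X ?N Fm = distr (\<mu> \<Otimes>\<^sub>M measure_pmf U) ?N Hm"
  proof (rule measure_eqI)
    show "sets (distr X ?N Fm) = sets (distr (\<mu> \<Otimes>\<^sub>M measure_pmf U) ?N Hm)" by simp
    fix A assume "A \<in> sets (distr X ?N Fm)"
    then have A: "A \<in> sets ?N" by simp
    define Lf where "Lf g = (\<Sum>u\<in>{..k}. (\<Sum>\<tau>\<in>S. indicator A (\<lambda>i\<in>{..k}. Gbar g (\<tau> i) - Gbar g u) * ennreal (pmf T \<tau>)) * ennreal (pmf U u))" for g
    define Rf where "Rf x = (\<Sum>u\<in>{..k}. indicator A (\<lambda>i\<in>{..k}. (x::nat\<Rightarrow>real) i - x u) * ennreal (pmf U u))" for x
    have inner_meas: "(\<lambda>g. \<lambda>i\<in>{..k}. Gbar g (\<tau> i) - Gbar g u) \<in> measurable ?G ?N" for \<tau> u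
      by (intro measurable_restrict borel_measurable_diff Gbar_meas)
    have Lf_meas: "Lf \<in> borel_measurable ?G"
      unfolding Lf_def
      by (intro borel_measurable_sum borel_measurable_times_ennreal borel_measurable_const
            measurable_compose[OF inner_meas borel_measurable_indicator[OF A]])
    have Rf_meas: "Rf \<in> borel_measurable ?N"
    proof -
      have "(\<lambda>x. \<lambda>i\<in>{..k}. (x::nat\<Rightarrow>real) i - x u) \<in> measurable ?N ?N" for u
        by (intro measurable_restrict borel_measurable_diff comp_any)
      then show ?thesis unfolding Rf_def
        by (intro borel_measurable_sum borel_measurable_times_ennreal borel_measurable_const
            measurable_compose[OF _ borel_measurable_indicator[OF A]])
    qed
    have Rf_meas\<mu>: "Rf \<in> borel_measurable \<mu>"
      unfolding eqBe by (rule Rf_meas)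
    have ind_meas: "(\<lambda>z. indicator A (Fm z) :: ennreal) \<in> borel_measurable X"
      by (rule measurable_compose[OF Fmeas borel_measurable_indicator[OF A]])
    have L: "emeasure (distr X ?N Fm) A = (\<integral>\<^sup>+x. Lf (gaps k x) \<partial>\<mu>)"
    proof -
      have "emeasure (distr X ?N Fm) A = (\<integral>\<^sup>+y. indicator A y \<partial>distr X ?N Fm)"
        using A by simp
      also have "\<dots> = (\<integral>\<^sup>+z. indicator A (Fm z) \<partial>X)"
        by (rule nn_integral_distr[OF Fmeas]) (use A in simp)
      also have "\<dots> = (\<integral>\<^sup>+g. \<integral>\<^sup>+w. indicator A (Fm (g, w)) \<partial>(measure_pmf U \<Otimes>\<^sub>M measure_pmf T) \<partial>gamma k \<mu>)"
        unfolding X_def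
        by (rule sigma_finite_measure.nn_integral_fst[OF sfUT, symmetric]) (use ind_meas in \<open>simp add: X_def\<close>)
      also have "\<dots> = (\<integral>\<^sup>+g. Lf g \<partial>gamma k \<mu>)"
      proof (rule nn_integral_cong)
        fix g assume g: "g \<in> space (gamma k \<mu>)"
        have mw: "(\<lambda>w. indicator A (Fm (g, w)) :: ennreal) \<in> borel_measurable (measure_pmf U \<Otimes>\<^sub>M measure_pmf T)"
          using measurable_Pair2[OF ind_meas[unfolded X_def] g] by simp
        have "(\<integral>\<^sup>+w. indicator A (Fm (g, w)) \<partial>(measure_pmf U \<Otimes>\<^sub>M measure_pmf T))
            = (\<integral>\<^sup>+u. \<integral>\<^sup>+\<tau>. indicator A (Fm (g, u, \<tau>)) \<partial>measure_pmf T \<partial>measure_pmf U)"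
          by (rule sigma_finite_measure.nn_integral_fst[OF sfT, symmetric]) (use mw in simp)
        also have "\<dots> = (\<integral>\<^sup>+u. (\<Sum>\<tau>\<in>S. indicator A (Fm (g, u, \<tau>)) * ennreal (pmf T \<tau>)) \<partial>measure_pmf U)"
          by (intro nn_integral_cong) (simp add: nn_integral_measure_pmf_finite setT finS)
        also have "\<dots> = (\<Sum>u\<in>{..k}. (\<Sum>\<tau>\<in>S. indicator A (Fm (g, u, \<tau>)) * ennreal (pmf T \<tau>)) * ennreal (pmf U u))"
          by (simp add: nn_integral_measure_pmf_finite setU)
        also have "\<dots> = Lf g" unfolding Lf_def Fm_def by simp
        finally show "(\<integral>\<^sup>+w. indicator A (Fm (g, w)) \<partial>(measure_pmf U \<Otimes>\<^sub>M measure_pmf T)) = Lf g" .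
      qed
      also have "\<dots> = (\<integral>\<^sup>+x. Lf (gaps k x) \<partial>\<mu>)"
        unfolding gamma_def by (rule nn_integral_distr[OF gm]) (use Lf_meas in simp)
      finally show ?thesis .
    qed
    have R0: "emeasure (distr (\<mu> \<Otimes>\<^sub>M measure_pmf U) ?N Hm) A = (\<integral>\<^sup>+x. Rf x \<partial>\<mu>)"
    proof -
      have ind_meas2: "(\<lambda>z. indicator A (Hm z) :: ennreal) \<in> borel_measurable (\<mu> \<Otimes>\<^sub>M measure_pmf U)"
        by (rule measurable_compose[OF Hmeas borel_measurable_indicator[OF A]])
      have "emeasure (distr (\<mu> \<Otimes>\<^sub>M measure_pmf U) ?N Hm) A = (\<integral>\<^sup>+y. indicator A y \<partial>distr (\<mu> \<Otimes>\<^sub>M measure_pmf U) ?N Hm)"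
        using A by simp
      also have "\<dots> = (\<integral>\<^sup>+z. indicator A (Hm z) \<partial>(\<mu> \<Otimes>\<^sub>M measure_pmf U))"
        by (rule nn_integral_distr[OF Hmeas]) (use A in simp)
      also have "\<dots> = (\<integral>\<^sup>+x. \<integral>\<^sup>+u. indicator A (Hm (x, u)) \<partial>measure_pmf U \<partial>\<mu>)"
        by (rule sigma_finite_measure.nn_integral_fst[OF sfU, symmetric]) (use ind_meas2 in simp)
      also have "\<dots> = (\<integral>\<^sup>+x. Rf x \<partial>\<mu>)"
        by (intro nn_integral_cong) (simp add: nn_integral_measure_pmf_finite setU Rf_def Hm_def)
      finally show ?thesis .
    qed
    have ex: "(\<integral>\<^sup>+x. Rf x \<partial>\<mu>) = (\<integral>\<^sup>+x. Rf (pm k \<pi> x) \<partial>\<mu>)" if \<pi>: "\<pi> \<in> S" for \<pi>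
    proof -
      have \<pi>': "\<pi> permutes {..k}" using \<pi> by (simp add: S_def)
      have pmm': "pm k \<pi> \<in> measurable \<mu> ?N"
        unfolding eqNN by (rule pm_meas[OF \<pi>'])
      have "(\<integral>\<^sup>+x. Rf x \<partial>distr \<mu> ?N (pm k \<pi>)) = (\<integral>\<^sup>+x. Rf (pm k \<pi> x) \<partial>\<mu>)"
        by (rule nn_integral_distr[OF pmm']) (use Rf_meas in simp)
      then show ?thesis using exch[OF assms(1) assms(2) \<pi>'] by simp
    qed
    have R1: "(\<integral>\<^sup>+x. Rf x \<partial>\<mu>) = (\<integral>\<^sup>+x. (\<Sum>\<pi>\<in>S. ennreal (pmf T \<pi>) * Rf (pm k \<pi> x)) \<partial>\<mu>)"
    proof -
      have "(\<integral>\<^sup>+x. Rf x \<partial>\<mu>) = (\<Sum>\<pi>\<in>S. ennreal (pmf T \<pi>)) * (\<integral>\<^sup>+x. Rf x \<partial>\<mu>)"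
        by (simp add: sumT)
      also have "\<dots> = (\<Sum>\<pi>\<in>S. ennreal (pmf T \<pi>) * (\<integral>\<^sup>+x. Rf x \<partial>\<mu>))"
        by (rule sum_distrib_right)
      also have "\<dots> = (\<Sum>\<pi>\<in>S. ennreal (pmf T \<pi>) * (\<integral>\<^sup>+x. Rf (pm k \<pi> x) \<partial>\<mu>))"
        using ex by (intro sum.cong) auto
      also have "\<dots> = (\<Sum>\<pi>\<in>S. (\<integral>\<^sup>+x. ennreal (pmf T \<pi>) * Rf (pm k \<pi> x) \<partial>\<mu>))"
      proof (intro sum.cong refl)
        fix \<pi> assume \<pi>: "\<pi> \<in> S"
        have \<pi>': "\<pi> permutes {..k}" using \<pi> by (simp add: S_def)
        have pmm': "pm k \<pi> \<in> measurable \<mu> ?N"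
          unfolding eqNN by (rule pm_meas[OF \<pi>'])
        show "ennreal (pmf T \<pi>) * (\<integral>\<^sup>+x. Rf (pm k \<pi> x) \<partial>\<mu>) = (\<integral>\<^sup>+x. ennreal (pmf T \<pi>) * Rf (pm k \<pi> x) \<partial>\<mu>)"
          by (rule nn_integral_cmult[symmetric]) (rule measurable_compose[OF pmm' Rf_meas])
      qed
      also have "\<dots> = (\<integral>\<^sup>+x. (\<Sum>\<pi>\<in>S. ennreal (pmf T \<pi>) * Rf (pm k \<pi> x)) \<partial>\<mu>)"
      proof (rule nn_integral_sum[symmetric])
        fix \<pi> assume \<pi>: "\<pi> \<in> S"
        have \<pi>': "\<pi> permutes {..k}" using \<pi> by (simp add: S_def)
        have pmm': "pm k \<pi> \<in> measurable \<mu> ?N"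
          unfolding eqNN by (rule pm_meas[OF \<pi>'])
        show "(\<lambda>x. ennreal (pmf T \<pi>) * Rf (pm k \<pi> x)) \<in> borel_measurable \<mu>"
          by (intro borel_measurable_times_ennreal borel_measurable_const measurable_compose[OF pmm' Rf_meas])
      qed
      finally show ?thesis .
    qed
    have pw: "(\<Sum>\<pi>\<in>S. ennreal (pmf T \<pi>) * Rf (pm k \<pi> x)) = Lf (gaps k x)" for x
    proof -
      define cT where "cT = ennreal (1 / real (card S))"
      define cU where "cU = ennreal (1 / real (Suc k))"
      define \<Phi> where "\<Phi> = (\<lambda>v. indicator A v :: ennreal)"
      have "(\<Sum>\<pi>\<in>S. ennreal (pmf T \<pi>) * Rf (pm k \<pi> x))
          = (\<Sum>\<pi>\<in>S. cT * (\<Sum>u\<in>{..k}. \<Phi> (\<lambda>i\<in>{..k}. x (\<pi> i) - x (\<pi> u)) * cU))"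
      proof (intro sum.cong refl)
        fix \<pi> assume \<pi>: "\<pi> \<in> S"
        have "Rf (pm k \<pi> x) = (\<Sum>u\<in>{..k}. \<Phi> (\<lambda>i\<in>{..k}. x (\<pi> i) - x (\<pi> u)) * cU)"
          unfolding Rf_def
        proof (intro sum.cong refl)
          fix u assume u: "u \<in> {..k}"
          have "(\<lambda>i\<in>{..k}. pm k \<pi> x i - pm k \<pi> x u) = (\<lambda>i\<in>{..k}. x (\<pi> i) - x (\<pi> u))"
            using u by (intro restrict_ext) (simp add: pm_def)
          then show "indicator A (\<lambda>i\<in>{..k}. pm k \<pi> x i - pm k \<pi> x u) * ennreal (pmf U u) = \<Phi> (\<lambda>i\<in>{..k}. x (\<pi> i) - x (\<pi> u)) * cU"
            using pU[OF u] by (simp add: \<Phi>_def cU_def)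
        qed
        then show "ennreal (pmf T \<pi>) * Rf (pm k \<pi> x) = cT * (\<Sum>u\<in>{..k}. \<Phi> (\<lambda>i\<in>{..k}. x (\<pi> i) - x (\<pi> u)) * cU)"
          using pT[OF \<pi>] by (simp add: cT_def)
      qed
      also have "\<dots> = cT * cU * (\<Sum>\<pi>\<in>S. \<Sum>u\<in>{..k}. \<Phi> (\<lambda>i\<in>{..k}. x (\<pi> i) - x (\<pi> u)))"
        by (simp add: sum_distrib_left sum_distrib_right mult_ac)
      also have "\<dots> = cT * cU * (\<Sum>\<tau>\<in>S. \<Sum>u\<in>{..k}. \<Phi> (\<lambda>i\<in>{..k}. Gbar (gaps k x) (\<tau> i) - Gbar (gaps k x) u))"
        unfolding S_def by (simp only: comb)
      also have "\<dots> = cT * cU * (\<Sum>u\<in>{..k}. \<Sum>\<tau>\<in>S. \<Phi> (\<lambda>i\<in>{..k}. Gbar (gaps k x) (\<tau> i) - Gbar (gaps k x) u))"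
        by (simp only: sum.swap[of _ S])
      also have "\<dots> = (\<Sum>u\<in>{..k}. (\<Sum>\<tau>\<in>S. \<Phi> (\<lambda>i\<in>{..k}. Gbar (gaps k x) (\<tau> i) - Gbar (gaps k x) u) * cT) * cU)"
        by (simp add: sum_distrib_left sum_distrib_right mult_ac)
      also have "\<dots> = Lf (gaps k x)"
        unfolding Lf_def
      proof (rule sum.cong[OF refl])
        fix u assume u: "u \<in> {..k}"
        have c1: "cU = ennreal (pmf U u)" using pU[OF u] by (simp add: cU_def)
        have c2: "(\<Sum>\<tau>\<in>S. \<Phi> (\<lambda>i\<in>{..k}. Gbar (gaps k x) (\<tau> i) - Gbar (gaps k x) u) * cT)
            = (\<Sum>\<tau>\<in>S. indicator A (\<lambda>i\<in>{..k}. Gbar (gaps k x) (\<tau> i) - Gbar (gaps k x) u) * ennreal (pmf T \<tau>))"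
          using pT by (intro sum.cong refl) (simp add: \<Phi>_def cT_def)
        show "(\<Sum>\<tau>\<in>S. \<Phi> (\<lambda>i\<in>{..k}. Gbar (gaps k x) (\<tau> i) - Gbar (gaps k x) u) * cT) * cU
            = (\<Sum>\<tau>\<in>S. indicator A (\<lambda>i\<in>{..k}. Gbar (gaps k x) (\<tau> i) - Gbar (gaps k x) u) * ennreal (pmf T \<tau>)) * ennreal (pmf U u)"
          unfolding c1 c2 ..
      qed
      finally show ?thesis .
    qed
    show "emeasure (distr X ?N Fm) A = emeasure (distr (\<mu> \<Otimes>\<^sub>M measure_pmf U) ?N Hm) A"
      unfolding L R0 R1 pw ..
  qed
  show ?thesis using main unfolding X_def Fm_def Hm_def U_def T_def S_def .
qed

end
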